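(* Let $m>0$, $c>0$, $\hbar>0$, and let $\varphi(x,t)=\exp\!\big[R(x,t)+\tfrac{i}{\hbar}S(x,t)\big]$, $x\in\mathbb{R}^3$, $t\ge 0$, with $R,S$ smooth and real-valued, be a solution of the Klein–Gordon equation $$\Delta\varphi-\frac{1}{c^2}\frac{\partial^2\varphi}{\partial t^2}=\frac{m^2c^2}{\hbar^2}\varphi$$ such that $S$ satisfies $$\frac{\partial S}{\partial t}+c\sqrt{m^2c^2+\nabla S\cdot\nabla S}=0 .$$ Write $x_\nu=(x,x^4)$ with $x^4=ict$, set $\tilde S(x_\nu)=S(x,t)$, $\tilde R(x_\nu)=R(x,t)$, let $\nabla_\nu=(\nabla,\partial/\partial x^4)$ and $\Delta_\nu=\nabla_\nu\cdot\nabla_\nu$, and let $\Sigma^2=\begin{pmatrix}\frac{\hbar}{m}I_3&0\\0&0\end{pmatrix}$. Consider the diffusion $\tilde X_\nu(\tau)$ with forward Itô differential $$d\tilde X_\nu(\tau)=\Big(\tfrac1m\nabla_\nu\tilde S+\Sigma^2\nabla_\nu\tilde R\Big)(\tilde X_\nu(\tau))\,d\tau+\Sigma\, d\tilde W_\nu(\tau),$$ with $\tilde W_\nu$ a standard four-dimensional Wiener process (equivalently, spatial part $d\tilde X=\big(\tfrac1m\nabla S+\tfrac{\hbar}{m}\nabla R\big)d\tau+\sqrt{\hbar/m}\,d\tilde W$ and time part $dT=-\tfrac{1}{mc^2}\tfrac{\partial S}{\partial t}\,d\tau$ where $\tilde X^4=icT$). Then $\tilde\rho(x_\nu)=|\varphi(x_\nu)|^2$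 is a stationary solution of the associated Fokker–Planck equation $$\frac{\partial\rho_\nu}{\partial\tau}+\nabla_\nu\cdot\Big[\Big(\tfrac1m\nabla_\nu\tilde S+\Sigma^2\nabla_\nu\tilde R\Big)\rho_\nu\Big]=\tfrac12\Sigma^2\Delta_\nu\rho_\nu,$$ so that $\mu(dx_\nu)=\tilde\rho(x_\nu)\,dx_\nu$ is an invariant ($\sigma$-finite) measure for this process; moreover $\tilde\rho$ satisfies the covariant continuity equation $$\nabla_\nu\cdot\Big(\tilde\rho\,\tfrac1m\nabla_\nu\tilde S\Big)=0,$$ i.e. $\nabla\cdot(|\varphi|^2\nabla S)-\frac{1}{c^2}\frac{\partial}{\partial t}\big(|\varphi|^2\frac{\partial S}{\partial t}\big)=0$.
   Context: Here $\nabla$ and $\Delta$ denote the spatial gradient and Laplacian on $\mathbb{R}^3$, and $\partial/\partial x^4=\frac{1}{ic}\partial/\partial t$ under the identification $x^4=ict$. In the expression $\tfrac12\Sigma^2\Delta_\nu\rho_\nu$, the matrix $\Sigma^2$ acts so that only the spatial second derivatives appear, i.e. it equals $\frac{\hbar}{2m}\Delta\rho_\nu$. *)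

theory Defs
  imports "HOL-Analysis.Analysis"
begin

definition px :: "3 \<Rightarrow> (real^3 \<Rightarrow> real \<Rightarrow> 'b::real_normed_vector) \<Rightarrow> real^3 \<Rightarrow> real \<Rightarrow> 'b" where
  "px i f x t = vector_derivative (\<lambda>h. f (x + h *\<^sub>R axis i 1) t) (at 0)"

definition pt :: "(real^3 \<Rightarrow> real \<Rightarrow> 'b::real_normed_vector) \<Rightarrow> real^3 \<Rightarrow> real \<Rightarrow> 'b" where
  "pt f x t = vector_derivative (\<lambda>s. f x s) (at t)"

definition lap :: "(real^3 \<Rightarrow> real \<Rightarrow> 'b::real_normed_vector) \<Rightarrow> real^3 \<Rightarrow> real \<Rightarrow> 'b" where
  "lap f x t = (\<Sum>i\<in>UNIV. px i (px i f) x t)"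

definition dirder :: "'a::euclidean_space \<Rightarrow> ('a \<Rightarrow> 'b::real_normed_vector) \<Rightarrow> 'a \<Rightarrow> 'b" where
  "dirder v f p = vector_derivative (\<lambda>h. f (p + h *\<^sub>R v)) (at 0)"

fun iter_dirder :: "'a::euclidean_space list \<Rightarrow> ('a \<Rightarrow> 'b::real_normed_vector) \<Rightarrow> 'a \<Rightarrow> 'b" where
  "iter_dirder [] f = f"
| "iter_dirder (v # vs) f = dirder v (iter_dirder vs f)"

definition smooth_fun :: "('a::euclidean_space \<Rightarrow> 'b::real_normed_vector) \<Rightarrow> bool" where
  "smooth_fun f \<longleftrightarrow> (\<forall>vs. set vs \<subseteq> Basis \<longrightarrow>
      continuous_on UNIV (iter_dirder vs f) \<and>
      (\<forall>v\<in>Basis. \<forall>p. (\<lambda>h. iter_dirder vs f (p + h *\<^sub>R v)) differentiable (at 0)))"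

text \<open>Four-vector calculus with x^4 = i c t, so d/dx^4 = (1/(i c)) d/dt.
  A four-vector is a pair (spatial part in complex^3, fourth component).\<close>

definition p4 :: "real \<Rightarrow> (real^3 \<Rightarrow> real \<Rightarrow> complex) \<Rightarrow> real^3 \<Rightarrow> real \<Rightarrow> complex" where
  "p4 c f x t = (1 / (\<i> * complex_of_real c)) * pt f x t"

definition grad4 :: "real \<Rightarrow> (real^3 \<Rightarrow> real \<Rightarrow> complex) \<Rightarrow> real^3 \<Rightarrow> real \<Rightarrow> (complex^3) \<times> complex" where
  "grad4 c f x t = ((\<chi> i. px i f x t), p4 c f x t)"

definition div4 :: "real \<Rightarrow> (real^3 \<Rightarrow> real \<Rightarrow> (complex^3) \<times> complex) \<Rightarrow> real^3 \<Rightarrow> real \<Rightarrow> complex" where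
  "div4 c V x t = (\<Sum>i\<in>UNIV. px i (\<lambda>y s. fst (V y s) $ i) x t) + p4 c (\<lambda>y s. snd (V y s)) x t"

definition Sigma2 :: "real \<Rightarrow> real \<Rightarrow> (complex^3) \<times> complex \<Rightarrow> (complex^3) \<times> complex" where
  "Sigma2 m hbar w = ((hbar / m) *\<^sub>R fst w, 0)"

definition cfun :: "(real^3 \<Rightarrow> real \<Rightarrow> real) \<Rightarrow> real^3 \<Rightarrow> real \<Rightarrow> complex" where
  "cfun f x t = complex_of_real (f x t)"

definition drift :: "real \<Rightarrow> real \<Rightarrow> real \<Rightarrow> (real^3 \<Rightarrow> real \<Rightarrow> real) \<Rightarrow> (real^3 \<Rightarrow> real \<Rightarrow> real)
    \<Rightarrow> real^3 \<Rightarrow> real \<Rightarrow> (complex^3) \<times> complex" where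
  "drift c m hbar S R x t = (1 / m) *\<^sub>R grad4 c (cfun S) x t + Sigma2 m hbar (grad4 c (cfun R) x t)"

end

theory Submission imports Defs begin

lemma basis_x: "(axis i 1, 0::real) \<in> (Basis :: ((real^3)\<times>real) set)"
  by (auto simp: Basis_prod_def Basis_vec_def)
lemma basis_t: "(0::real^3, 1::real) \<in> (Basis :: ((real^3)\<times>real) set)"
  by (simp add: Basis_prod_def)

lemma vd_shift:
  fixes f :: "real \<Rightarrow> real"
  shows "vector_derivative f (at t) = vector_derivative (\<lambda>h. f (t + h)) (at 0)"
proof -
  have "\<And>d. (f has_vector_derivative d) (at t) \<longleftrightarrow> ((\<lambda>h. f (t+h)) has_vector_derivative d) (at 0)"
    using DERIV_shift[of f _ 0 t] by (simp add: has_real_derivative_iff_has_vector_derivative add.commute)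
  then show ?thesis unfolding vector_derivative_def by simp
qed

lemma shift_diff:
  fixes f :: "real \<Rightarrow> real"
  assumes "(\<lambda>h. f (t + h)) differentiable (at 0)"
  shows "(f has_real_derivative vector_derivative f (at t)) (at t)"
proof -
  have "((\<lambda>h. f (t + h)) has_vector_derivative vector_derivative (\<lambda>h. f (t + h)) (at 0)) (at 0)"
    using assms vector_derivative_works by blast
  then have "((\<lambda>h. f (h + t)) has_real_derivative vector_derivative f (at t)) (at 0)"
    by (simp add: has_real_derivative_iff_has_vector_derivative add.commute vd_shift[of f t])
  then show ?thesis using DERIV_shift[of f _ 0 t] by simp
qed

lemma smooth_slices:
  fixes F :: "real^3 \<Rightarrow> real \<Rightarrow> real"
  assumes "smooth_fun (\<lambda>p. F (fst p) (snd p))"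
  shows "((\<lambda>h. F (x + h *\<^sub>R axis i 1) t) has_real_derivative px i F x t) (at 0)"
    and "((\<lambda>h. px i F (x + h *\<^sub>R axis i 1) t) has_real_derivative px i (px i F) x t) (at 0)"
    and "((\<lambda>u. F x u) has_real_derivative pt F x t) (at t)"
    and "((\<lambda>u. pt F x u) has_real_derivative pt (pt F) x t) (at t)"
proof -
  define G where "G = (\<lambda>p::(real^3)\<times>real. F (fst p) (snd p))"
  have D: "\<And>vs v p. set vs \<subseteq> Basis \<Longrightarrow> v \<in> Basis \<Longrightarrow> (\<lambda>h. iter_dirder vs G (p + h *\<^sub>R v)) differentiable (at 0)"
    using assms unfolding smooth_fun_def G_def by blast
  have 1: "(\<lambda>h. F (x + h *\<^sub>R axis i 1) t) differentiable (at 0)"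
    using D[of "[]" "(axis i 1, 0)" "(x,t)"] basis_x by (simp add: G_def)
  then show "((\<lambda>h. F (x + h *\<^sub>R axis i 1) t) has_real_derivative px i F x t) (at 0)"
    unfolding px_def has_real_derivative_iff_has_vector_derivative using vector_derivative_works by blast
  have e2: "dirder (axis i 1, 0) G = (\<lambda>p. px i F (fst p) (snd p))"
    by (rule ext) (simp add: dirder_def px_def G_def)
  have 2: "(\<lambda>h. px i F (x + h *\<^sub>R axis i 1) t) differentiable (at 0)"
    using D[of "[(axis i 1, 0)]" "(axis i 1, 0)" "(x,t)"] basis_x by (simp add: e2)
  then show "((\<lambda>h. px i F (x + h *\<^sub>R axis i 1) t) has_real_derivative px i (px i F) x t) (at 0)"
    unfolding px_def[of i "px i F"] has_real_derivative_iff_has_vector_derivative using vector_derivative_works by blast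
  have 3: "(\<lambda>h. F x (t + h)) differentiable (at 0)"
    using D[of "[]" "(0, 1)" "(x,t)"] basis_t by (simp add: G_def)
  show "((\<lambda>u. F x u) has_real_derivative pt F x t) (at t)"
    unfolding pt_def using shift_diff[OF 3] by simp
  have e4: "dirder (0, 1) G = (\<lambda>p. pt F (fst p) (snd p))"
    by (rule ext) (simp add: dirder_def pt_def G_def vd_shift[of "F _"])
  have 4: "(\<lambda>h. pt F x (t + h)) differentiable (at 0)"
    using D[of "[(0,1)]" "(0, 1)" "(x,t)"] basis_t by (simp add: e4)
  show "((\<lambda>u. pt F x u) has_real_derivative pt (pt F) x t) (at t)"
    unfolding pt_def[of "pt F"] using shift_diff[OF 4] by simp
qed

lemma px_real: "((\<lambda>h. f (x + h *\<^sub>R axis i 1) t) has_real_derivative d) (at 0) \<Longrightarrow> px i f x t = d"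
  unfolding px_def has_real_derivative_iff_has_vector_derivative by (rule vector_derivative_at)
lemma pt_real: "((\<lambda>u. f x u) has_real_derivative d) (at t) \<Longrightarrow> pt f x t = d"
  unfolding pt_def has_real_derivative_iff_has_vector_derivative by (rule vector_derivative_at)
lemma px_vec: "((\<lambda>h. f (x + h *\<^sub>R axis i 1) t) has_vector_derivative d) (at 0) \<Longrightarrow> px i f x t = d"
  unfolding px_def by (rule vector_derivative_at)
lemma pt_vec: "((\<lambda>u. f x u) has_vector_derivative d) (at t) \<Longrightarrow> pt f x t = d"
  unfolding pt_def by (rule vector_derivative_at)

lemma px_ofreal:
  "((\<lambda>h. f (x + h *\<^sub>R axis i 1) t) has_real_derivative d) (at 0) \<Longrightarrow>
    px i (\<lambda>y s. complex_of_real (f y s)) x t = complex_of_real d"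
  by (rule px_vec) (rule has_vector_derivative_of_real)
lemma pt_ofreal_mult:
  "((\<lambda>u. f x u) has_real_derivative d) (at t) \<Longrightarrow>
    pt (\<lambda>y s. complex_of_real (f y s) * K) x t = complex_of_real d * K"
  by (rule pt_vec) (intro derivative_eq_intros has_vector_derivative_of_real, auto)

lemma cexp_deriv:
  assumes "(a has_real_derivative a') (at z)" "(b has_real_derivative b') (at z)"
  shows "((\<lambda>h. exp (complex_of_real (a h) + (\<i> / complex_of_real hb) * complex_of_real (b h))) has_vector_derivative
    exp (complex_of_real (a z) + (\<i> / complex_of_real hb) * complex_of_real (b z)) *
      (complex_of_real a' + (\<i> / complex_of_real hb) * complex_of_real b')) (at z)"
proof -
  have g: "((\<lambda>h. complex_of_real (a h) + (\<i> / complex_of_real hb) * complex_of_real (b h)) has_vector_derivative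
     (complex_of_real a' + (\<i> / complex_of_real hb) * complex_of_real b')) (at z)"
    by (intro derivative_intros has_vector_derivative_of_real assms)
  from field_vector_diff_chain_at[OF g DERIV_exp] show ?thesis
    by (simp add: o_def mult.commute)
qed

lemma rexp_deriv:
  assumes "(a has_real_derivative a') (at z)" "(b has_real_derivative b') (at z)"
  shows "((\<lambda>h. exp (2 * a h) * b h) has_real_derivative exp (2 * a z) * (2 * a' * b z + b')) (at z)"
  by (rule derivative_eq_intros assms refl)+ (simp add: algebra_simps)

lemma rexp_deriv1:
  assumes "(a has_real_derivative a') (at z)"
  shows "((\<lambda>h. exp (2 * a h)) has_real_derivative exp (2 * a z) * (2 * a')) (at z)"
  by (rule derivative_eq_intros assms refl)+ (simp add: algebra_simps)

lemma ic_sq: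
  fixes c :: real and z :: complex
  assumes "c \<noteq> 0"
  shows "1 / (\<i> * complex_of_real c) * z * (1 / (\<i> * complex_of_real c)) = - z / complex_of_real (c^2)"
  using assms by (simp add: field_simps power2_eq_square)

lemma aux_div:
  fixes h a b g :: real
  assumes "h > 0" "a / h - b * (g / h) = 0"
  shows "a - b * g = 0"
proof -
  have "a / h - b * (g / h) = (a - b * g) / h" by (simp add: diff_divide_distrib)
  then show ?thesis using assms by simp
qed

theorem mainTheorem1:
  fixes m c hbar :: real
    and R S :: "real^3 \<Rightarrow> real \<Rightarrow> real"
    and \<phi> :: "real^3 \<Rightarrow> real \<Rightarrow> complex"
    and \<rho> :: "real^3 \<Rightarrow> real \<Rightarrow> real"
    and \<rho>\<^sub>\<nu> :: "real \<Rightarrow> real^3 \<Rightarrow> real \<Rightarrow> real"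
  assumes m_pos: "m > 0" and c_pos: "c > 0" and hbar_pos: "hbar > 0"
    and R_smooth: "smooth_fun (\<lambda>p. R (fst p) (snd p))"
    and S_smooth: "smooth_fun (\<lambda>p. S (fst p) (snd p))"
    and phi_def: "\<And>x t. \<phi> x t = exp (complex_of_real (R x t) + (\<i> / complex_of_real hbar) * complex_of_real (S x t))"
    and KG: "\<And>x t. t \<ge> 0 \<Longrightarrow>
        lap \<phi> x t - (1 / complex_of_real (c^2)) * pt (pt \<phi>) x t
          = complex_of_real (m^2 * c^2 / hbar^2) * \<phi> x t"
    and HJ: "\<And>x t. t \<ge> 0 \<Longrightarrow>
        pt S x t + c * sqrt (m^2 * c^2 + (\<Sum>i\<in>UNIV. (px i S x t)^2)) = 0"
    and rho_def: "\<And>x t. \<rho> x t = (cmod (\<phi> x t))^2"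
    and rho_nu_def: "\<And>\<tau> x t. \<rho>\<^sub>\<nu> \<tau> x t = \<rho> x t"
  shows "(\<forall>\<tau> x t. t \<ge> 0 \<longrightarrow>
            complex_of_real (vector_derivative (\<lambda>\<sigma>. \<rho>\<^sub>\<nu> \<sigma> x t) (at \<tau>))
            + div4 c (\<lambda>y s. \<rho>\<^sub>\<nu> \<tau> y s *\<^sub>R drift c m hbar S R y s) x t
            = complex_of_real (hbar / (2 * m) * lap (\<rho>\<^sub>\<nu> \<tau>) x t))
       \<and> (\<forall>x t. t \<ge> 0 \<longrightarrow>
            div4 c (\<lambda>y s. \<rho> y s *\<^sub>R ((1 / m) *\<^sub>R grad4 c (cfun S) y s)) x t = 0)
       \<and> (\<forall>x t. t \<ge> 0 \<longrightarrow>
            (\<Sum>i\<in>UNIV. px i (\<lambda>y s. (cmod (\<phi> y s))^2 * px i S y s) x t)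
            - (1 / c^2) * pt (\<lambda>y s. (cmod (\<phi> y s))^2 * pt S y s) x t = 0)"
proof -
  note dR = smooth_slices[OF R_smooth] and dS = smooth_slices[OF S_smooth]
  have rho_eq: "\<And>y s. (cmod (\<phi> y s))^2 = exp (2 * R y s)"
    by (simp add: phi_def flip: exp_of_nat_mult)
  have rho_fun: "\<rho> = (\<lambda>y s. exp (2 * R y s))" using rho_def rho_eq by (intro ext) simp
  define Gx where "Gx i y s = complex_of_real (px i R y s) + (\<i> / complex_of_real hbar) * complex_of_real (px i S y s)" for i y s
  define Gxx where "Gxx i y s = complex_of_real (px i (px i R) y s) + (\<i> / complex_of_real hbar) * complex_of_real (px i (px i S) y s)" for i y s
  define Gt where "Gt y s = complex_of_real (pt R y s) + (\<i> / complex_of_real hbar) * complex_of_real (pt S y s)" for y s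
  define Gtt where "Gtt y s = complex_of_real (pt (pt R) y s) + (\<i> / complex_of_real hbar) * complex_of_real (pt (pt S) y s)" for y s
  have phx_d: "((\<lambda>h. \<phi> (y + h *\<^sub>R axis i 1) s) has_vector_derivative \<phi> y s * Gx i y s) (at 0)" for i y s
    using cexp_deriv[OF dR(1)[of y i s] dS(1)[of y i s], where hb=hbar] by (simp add: phi_def Gx_def)
  have pht_d: "((\<lambda>u. \<phi> y u) has_vector_derivative \<phi> y s * Gt y s) (at s)" for y s
    using cexp_deriv[OF dR(3)[of y s] dS(3)[of y s], where hb=hbar] by (simp add: phi_def Gt_def)
  have phx: "px i \<phi> = (\<lambda>y s. \<phi> y s * Gx i y s)" for i
    by (intro ext px_vec phx_d)
  have pht: "pt \<phi> = (\<lambda>y s. \<phi> y s * Gt y s)"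
    by (intro ext pt_vec pht_d)
  have phxx: "px i (px i \<phi>) y s = \<phi> y s * ((Gx i y s)^2 + Gxx i y s)" for i y s
  proof -
    have g: "((\<lambda>h. Gx i (y + h *\<^sub>R axis i 1) s) has_vector_derivative Gxx i y s) (at 0)"
      unfolding Gx_def Gxx_def
      by (intro derivative_intros has_vector_derivative_of_real dR(2) dS(2))
    have "px i (px i \<phi>) y s = \<phi> y s * Gxx i y s + \<phi> y s * Gx i y s * Gx i y s"
      unfolding phx by (rule px_vec) (use has_vector_derivative_mult[OF phx_d g] in simp)
    then show ?thesis by (simp add: algebra_simps power2_eq_square)
  qed
  have phtt: "pt (pt \<phi>) y s = \<phi> y s * ((Gt y s)^2 + Gtt y s)" for y s
  proof -
    have g: "((\<lambda>u. Gt y u) has_vector_derivative Gtt y s) (at s)"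
      unfolding Gt_def Gtt_def
      by (intro derivative_intros has_vector_derivative_of_real dR(4) dS(4))
    have "pt (pt \<phi>) y s = \<phi> y s * Gtt y s + \<phi> y s * Gt y s * Gt y s"
      unfolding pht by (rule pt_vec) (use has_vector_derivative_mult[OF pht_d g] in simp)
    then show ?thesis by (simp add: algebra_simps power2_eq_square)
  qed
  have key: "(\<Sum>i\<in>UNIV. 2 * px i R x t * px i S x t + px i (px i S) x t)
      - (1 / c^2) * (2 * pt R x t * pt S x t + pt (pt S) x t) = 0" if "t \<ge> 0" for x t
  proof -
    have A: "\<phi> x t * ((\<Sum>i\<in>UNIV. (Gx i x t)^2 + Gxx i x t) - (1 / complex_of_real (c^2)) * ((Gt x t)^2 + Gtt x t))
        = \<phi> x t * complex_of_real (m^2 * c^2 / hbar^2)"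
      using KG[OF that] unfolding lap_def phxx phtt
      by (simp add: sum_distrib_left algebra_simps)
    have nz: "\<phi> x t \<noteq> 0" by (simp add: phi_def)
    have E: "(\<Sum>i\<in>UNIV. (Gx i x t)^2 + Gxx i x t) - (1 / complex_of_real (c^2)) * ((Gt x t)^2 + Gtt x t)
        = complex_of_real (m^2 * c^2 / hbar^2)" using mult_left_cancel[OF nz] A by blast
    have ix: "Im ((Gx i x t)^2 + Gxx i x t) = (2 * px i R x t * px i S x t + px i (px i S) x t) / hbar" for i
      using hbar_pos by (simp add: Gx_def Gxx_def power2_eq_square field_simps)
    have it: "Im ((Gt x t)^2 + Gtt x t) = (2 * pt R x t * pt S x t + pt (pt S) x t) / hbar"
      using hbar_pos by (simp add: Gt_def Gtt_def power2_eq_square field_simps)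
    have imc: "Im ((1 / complex_of_real (c^2)) * ((Gt x t)^2 + Gtt x t)) = (1 / c^2) * Im ((Gt x t)^2 + Gtt x t)"
      by simp
    have "Im ((\<Sum>i\<in>UNIV. (Gx i x t)^2 + Gxx i x t) - (1 / complex_of_real (c^2)) * ((Gt x t)^2 + Gtt x t))
      = (\<Sum>i\<in>UNIV. (2 * px i R x t * px i S x t + px i (px i S) x t) / hbar)
       - (1 / c^2) * ((2 * pt R x t * pt S x t + pt (pt S) x t) / hbar)"
      by (simp only: minus_complex.sel Im_sum ix it imc)
    note Lq = this
    have I: "Im ((\<Sum>i\<in>UNIV. (Gx i x t)^2 + Gxx i x t) - (1 / complex_of_real (c^2)) * ((Gt x t)^2 + Gtt x t)) = 0"
      using arg_cong[where f=Im, OF E] by (simp only: Im_complex_of_real)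
    have "(\<Sum>i\<in>UNIV. (2 * px i R x t * px i S x t + px i (px i S) x t) / hbar)
       - (1 / c^2) * ((2 * pt R x t * pt S x t + pt (pt S) x t) / hbar) = 0"
      unfolding Lq[symmetric] by (rule I)
    then show ?thesis using hbar_pos aux_div
      by (simp only: sum_divide_distrib[symmetric])
  qed

  have cS: "cfun S = (\<lambda>y s. complex_of_real (S y s))" by (intro ext) (simp add: cfun_def)
  have cR: "cfun R = (\<lambda>y s. complex_of_real (R y s))" by (intro ext) (simp add: cfun_def)
  have pxcS: "px i (cfun S) y s = complex_of_real (px i S y s)" for i y s
    unfolding cS by (rule px_ofreal[OF dS(1)])
  have pxcR: "px i (cfun R) y s = complex_of_real (px i R y s)" for i y s
    unfolding cR by (rule px_ofreal[OF dR(1)])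
  have ptcS: "pt (cfun S) y s = complex_of_real (pt S y s)" for y s
    unfolding cS by (rule pt_vec) (rule has_vector_derivative_of_real[OF dS(3)])
  have c0: "c \<noteq> 0" using c_pos by simp
  have P3: "(\<Sum>i\<in>UNIV. px i (\<lambda>y s. (cmod (\<phi> y s))^2 * px i S y s) x t)
            - (1 / c^2) * pt (\<lambda>y s. (cmod (\<phi> y s))^2 * pt S y s) x t = 0" if "t \<ge> 0" for x t
  proof -
    have a: "px i (\<lambda>y s. (cmod (\<phi> y s))^2 * px i S y s) x t
        = exp (2 * R x t) * (2 * px i R x t * px i S x t + px i (px i S) x t)" for i
      unfolding rho_eq by (rule px_real) (use rexp_deriv[OF dR(1)[where x=x and i=i and t=t] dS(2)[where x=x and i=i and t=t]] in simp)
    have b: "pt (\<lambda>y s. (cmod (\<phi> y s))^2 * pt S y s) x t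
        = exp (2 * R x t) * (2 * pt R x t * pt S x t + pt (pt S) x t)"
      unfolding rho_eq by (rule pt_real) (use rexp_deriv[OF dR(3)[where x=x and t=t] dS(4)[where x=x and t=t]] in simp)
    have "(\<Sum>i\<in>UNIV. px i (\<lambda>y s. (cmod (\<phi> y s))^2 * px i S y s) x t)
            - (1 / c^2) * pt (\<lambda>y s. (cmod (\<phi> y s))^2 * pt S y s) x t
        = exp (2 * R x t) * ((\<Sum>i\<in>UNIV. 2 * px i R x t * px i S x t + px i (px i S) x t)
      - (1 / c^2) * (2 * pt R x t * pt S x t + pt (pt S) x t))"
      unfolding a b by (simp add: sum_distrib_left algebra_simps)
    then show ?thesis using key[OF that] by simp
  qed
  have P2: "div4 c (\<lambda>y s. \<rho> y s *\<^sub>R ((1 / m) *\<^sub>R grad4 c (cfun S) y s)) x t = 0" if "t \<ge> 0" for x t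
  proof -
    have f1: "(\<lambda>y s. fst (\<rho> y s *\<^sub>R ((1 / m) *\<^sub>R grad4 c (cfun S) y s)) $ i)
        = (\<lambda>y s. complex_of_real (exp (2 * R y s) * (px i S y s / m)))" for i
      by (intro ext) (simp add: grad4_def rho_fun pxcS, simp add: scaleR_conv_of_real)
    have f2: "(\<lambda>y s. snd (\<rho> y s *\<^sub>R ((1 / m) *\<^sub>R grad4 c (cfun S) y s)))
        = (\<lambda>y s. complex_of_real (exp (2 * R y s) * (pt S y s / m)) * (1 / (\<i> * complex_of_real c)))"
      by (intro ext) (simp add: grad4_def p4_def rho_fun ptcS scaleR_conv_of_real)
    have a: "px i (\<lambda>y s. complex_of_real (exp (2 * R y s) * (px i S y s / m))) x t
        = complex_of_real (exp (2 * R x t) * (2 * px i R x t * (px i S x t / m) + px i (px i S) x t / m))" for i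
      by (rule px_ofreal) (use rexp_deriv[OF dR(1)[where x=x and i=i and t=t] DERIV_cdivide[OF dS(2)[where x=x and i=i and t=t]]] in simp)
    have b: "pt (\<lambda>y s. complex_of_real (exp (2 * R y s) * (pt S y s / m)) * (1 / (\<i> * complex_of_real c))) x t
        = complex_of_real (exp (2 * R x t) * (2 * pt R x t * (pt S x t / m) + pt (pt S) x t / m)) * (1 / (\<i> * complex_of_real c))"
      by (rule pt_ofreal_mult) (use rexp_deriv[OF dR(3)[where x=x and t=t] DERIV_cdivide[OF dS(4)[where x=x and t=t]]] in simp)
    have "div4 c (\<lambda>y s. \<rho> y s *\<^sub>R ((1 / m) *\<^sub>R grad4 c (cfun S) y s)) x t
      = complex_of_real (\<Sum>i\<in>UNIV. exp (2 * R x t) * (2 * px i R x t * (px i S x t / m) + px i (px i S) x t / m))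
        - complex_of_real (exp (2 * R x t) * (2 * pt R x t * (pt S x t / m) + pt (pt S) x t / m)) / complex_of_real (c^2)"
      unfolding div4_def f1 f2 p4_def a b by (simp only: mult.assoc[symmetric] ic_sq[OF c0] of_real_sum[symmetric]) simp
    also have "\<dots> = complex_of_real ((\<Sum>i\<in>UNIV. exp (2 * R x t) * (2 * px i R x t * (px i S x t / m) + px i (px i S) x t / m))
        - (exp (2 * R x t) * (2 * pt R x t * (pt S x t / m) + pt (pt S) x t / m)) / c^2)"
      by simp
    also have "\<dots> = 0"
    proof -
      have r1: "(\<Sum>i\<in>UNIV. exp (2 * R x t) * (2 * px i R x t * (px i S x t / m) + px i (px i S) x t / m))
          = exp (2 * R x t) / m * (\<Sum>i\<in>UNIV. 2 * px i R x t * px i S x t + px i (px i S) x t)"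
        unfolding sum_distrib_left using m_pos by (intro sum.cong) (simp_all add: field_simps)
      have r2: "exp (2 * R x t) * (2 * pt R x t * (pt S x t / m) + pt (pt S) x t / m)
          = exp (2 * R x t) / m * (2 * pt R x t * pt S x t + pt (pt S) x t)"
        using m_pos by (simp add: field_simps)
      have "(\<Sum>i\<in>UNIV. 2 * px i R x t * px i S x t + px i (px i S) x t)
          = (1 / c^2) * (2 * pt R x t * pt S x t + pt (pt S) x t)" using key[OF that] by simp
      then show ?thesis unfolding r1 r2 by simp
    qed
    finally show ?thesis .
  qed
  have P1: "complex_of_real (vector_derivative (\<lambda>\<sigma>. \<rho>\<^sub>\<nu> \<sigma> x t) (at \<tau>))
            + div4 c (\<lambda>y s. \<rho>\<^sub>\<nu> \<tau> y s *\<^sub>R drift c m hbar S R y s) x t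
            = complex_of_real (hbar / (2 * m) * lap (\<rho>\<^sub>\<nu> \<tau>) x t)" if "t \<ge> 0" for \<tau> x t
  proof -
    have rn: "\<rho>\<^sub>\<nu> \<tau> = (\<lambda>y s. exp (2 * R y s))" by (intro ext) (simp add: rho_nu_def rho_fun)
    have vd: "vector_derivative (\<lambda>\<sigma>. \<rho>\<^sub>\<nu> \<sigma> x t) (at \<tau>) = 0" by (simp add: rho_nu_def)
    have f1: "(\<lambda>y s. fst (\<rho>\<^sub>\<nu> \<tau> y s *\<^sub>R drift c m hbar S R y s) $ i)
        = (\<lambda>y s. complex_of_real (exp (2 * R y s) * ((px i S y s + hbar * px i R y s) / m)))" for i
      by (intro ext) (simp add: drift_def grad4_def Sigma2_def rn pxcS pxcR, simp add: scaleR_conv_of_real field_simps add_divide_distrib)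
    have f2: "(\<lambda>y s. snd (\<rho>\<^sub>\<nu> \<tau> y s *\<^sub>R drift c m hbar S R y s))
        = (\<lambda>y s. complex_of_real (exp (2 * R y s) * (pt S y s / m)) * (1 / (\<i> * complex_of_real c)))"
      by (intro ext) (simp add: drift_def Sigma2_def grad4_def p4_def rn ptcS scaleR_conv_of_real)
    have a: "px i (\<lambda>y s. complex_of_real (exp (2 * R y s) * ((px i S y s + hbar * px i R y s) / m))) x t
        = complex_of_real (exp (2 * R x t) * (2 * px i R x t * ((px i S x t + hbar * px i R x t) / m)
            + (px i (px i S) x t + hbar * px i (px i R) x t) / m))" for i
      by (rule px_ofreal) (use rexp_deriv[OF dR(1)[where x=x and i=i and t=t]
            DERIV_cdivide[OF DERIV_add[OF dS(2)[where x=x and i=i and t=t] DERIV_cmult[OF dR(2)[where x=x and i=i and t=t]]]]] in simp)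
    have b: "pt (\<lambda>y s. complex_of_real (exp (2 * R y s) * (pt S y s / m)) * (1 / (\<i> * complex_of_real c))) x t
        = complex_of_real (exp (2 * R x t) * (2 * pt R x t * (pt S x t / m) + pt (pt S) x t / m)) * (1 / (\<i> * complex_of_real c))"
      by (rule pt_ofreal_mult) (use rexp_deriv[OF dR(3)[where x=x and t=t] DERIV_cdivide[OF dS(4)[where x=x and t=t]]] in simp)
    have pr: "px i (\<lambda>y s. exp (2 * R y s)) = (\<lambda>y s. exp (2 * R y s) * (2 * px i R y s))" for i
      by (intro ext, rule px_real) (use rexp_deriv1[OF dR(1)] in simp)
    have prr: "px i (px i (\<lambda>y s. exp (2 * R y s))) x t
        = exp (2 * R x t) * (2 * px i R x t * (2 * px i R x t) + 2 * px i (px i R) x t)" for i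
      unfolding pr
    proof (rule px_real)
      have d2: "((\<lambda>h. 2 * px i R (x + h *\<^sub>R axis i 1) t) has_real_derivative 2 * px i (px i R) x t) (at 0)"
        by (rule DERIV_cmult[OF dR(2)])
      show "((\<lambda>h. exp (2 * R (x + h *\<^sub>R axis i 1) t) * (2 * px i R (x + h *\<^sub>R axis i 1) t)) has_real_derivative
          exp (2 * R x t) * (2 * px i R x t * (2 * px i R x t) + 2 * px i (px i R) x t)) (at 0)"
        using rexp_deriv[OF dR(1)[where x=x and i=i and t=t] d2] by simp
    qed
    have "complex_of_real (vector_derivative (\<lambda>\<sigma>. \<rho>\<^sub>\<nu> \<sigma> x t) (at \<tau>))
            + div4 c (\<lambda>y s. \<rho>\<^sub>\<nu> \<tau> y s *\<^sub>R drift c m hbar S R y s) x t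
      = complex_of_real (\<Sum>i\<in>UNIV. exp (2 * R x t) * (2 * px i R x t * ((px i S x t + hbar * px i R x t) / m)
            + (px i (px i S) x t + hbar * px i (px i R) x t) / m))
        - complex_of_real (exp (2 * R x t) * (2 * pt R x t * (pt S x t / m) + pt (pt S) x t / m)) / complex_of_real (c^2)"
      unfolding vd div4_def f1 f2 p4_def a b
      by (simp only: mult.assoc[symmetric] ic_sq[OF c0] of_real_sum[symmetric]) simp
    also have "\<dots> = complex_of_real ((\<Sum>i\<in>UNIV. exp (2 * R x t) * (2 * px i R x t * ((px i S x t + hbar * px i R x t) / m)
            + (px i (px i S) x t + hbar * px i (px i R) x t) / m))
        - (exp (2 * R x t) * (2 * pt R x t * (pt S x t / m) + pt (pt S) x t / m)) / c^2)"
      by simp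
    also have "\<dots> = complex_of_real (hbar / (2 * m) * lap (\<rho>\<^sub>\<nu> \<tau>) x t)"
    proof -
      have r1: "(\<Sum>i\<in>UNIV. exp (2 * R x t) * (2 * px i R x t * ((px i S x t + hbar * px i R x t) / m)
            + (px i (px i S) x t + hbar * px i (px i R) x t) / m))
          = (\<Sum>i\<in>UNIV. exp (2 * R x t) / m * (2 * px i R x t * px i S x t + px i (px i S) x t)
             + hbar / (2 * m) * (exp (2 * R x t) * (2 * px i R x t * (2 * px i R x t) + 2 * px i (px i R) x t)))"
        using m_pos by (intro sum.cong) (simp_all add: field_simps)
      have r2: "exp (2 * R x t) * (2 * pt R x t * (pt S x t / m) + pt (pt S) x t / m)
          = exp (2 * R x t) / m * (2 * pt R x t * pt S x t + pt (pt S) x t)"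
        using m_pos by (simp add: field_simps)
      have k: "(\<Sum>i\<in>UNIV. 2 * px i R x t * px i S x t + px i (px i S) x t)
          = (1 / c^2) * (2 * pt R x t * pt S x t + pt (pt S) x t)" using key[OF that] by simp
      have l: "lap (\<rho>\<^sub>\<nu> \<tau>) x t = (\<Sum>i\<in>UNIV. exp (2 * R x t) * (2 * px i R x t * (2 * px i R x t) + 2 * px i (px i R) x t))"
        unfolding lap_def rn prr ..
      have "(\<Sum>i\<in>UNIV. exp (2 * R x t) * (2 * px i R x t * ((px i S x t + hbar * px i R x t) / m)
            + (px i (px i S) x t + hbar * px i (px i R) x t) / m))
        - (exp (2 * R x t) * (2 * pt R x t * (pt S x t / m) + pt (pt S) x t / m)) / c^2
        = (exp (2 * R x t) / m * (\<Sum>i\<in>UNIV. 2 * px i R x t * px i S x t + px i (px i S) x t)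
           + hbar / (2 * m) * (\<Sum>i\<in>UNIV. exp (2 * R x t) * (2 * px i R x t * (2 * px i R x t) + 2 * px i (px i R) x t)))
          - exp (2 * R x t) / m * (2 * pt R x t * pt S x t + pt (pt S) x t) / c^2"
        unfolding r1 r2 sum.distrib[of "\<lambda>i. exp (2 * R x t) / m * (2 * px i R x t * px i S x t + px i (px i S) x t)"
           "\<lambda>i. hbar / (2 * m) * (exp (2 * R x t) * (2 * px i R x t * (2 * px i R x t) + 2 * px i (px i R) x t))"]
        by (simp only: sum_distrib_left)
      also have "\<dots> = hbar / (2 * m) * lap (\<rho>\<^sub>\<nu> \<tau>) x t"
        unfolding k l by simp
      finally show ?thesis by simp
    qed
    finally show ?thesis .
  qed
  show ?thesis using P1 P2 P3 by blast
qed

end
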